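(* If Assumptions (A1), (A2), (A3) and (A4) below hold, then $V^*_{N_p+1}(x)\le V^*_{N_p}(x)$ for all $x\in\mathtt{X}_{N_p}$, where $V^*_{N_p}(x)$ is the optimal value function of $\mathtt{P}_{N_p}(x)$ with prediction horizon length $N_p$.
   Context: Consider the uncertain linear system $x^+=Ax+Bu+w$ with $(A,B)\in\mathrm{conv}(\{(A_i,B_i),\,i\in\Gamma_p\})$, $\Gamma_p=\{1,\dots,n_p\}$, $w\in\mathsf W$ (convex polytope containing the origin in its interior), constraints $x\in\mathbb X$, $u\in\mathbb U$ (polytopes). The disturbance set is split as $\mathsf W\subseteq\overline{\mathsf W}\oplus\underline{\mathsf W}$ with $\overline{\mathsf W}=\mathrm{conv}\{w_l,\,l\in\Gamma_{\overline w}\}$ (large) and $\underline{\mathsf W}$ (small). Nominal model $z^+=A_iz+B_iv+w$, $w\in\overline{\mathsf W}$; control $u=v+K_{\mathrm{inv}}(x-z)$; $\mathsf S$ satisfies $(A_i+B_iK_{\mathrm{inv}})\mathsf S\oplus\underline{\mathsf W}\subseteq\mathsf S$; tightened sets $\mathbb Z=\mathbb X\ominus\mathsf S$, $\mathbb V=\mathbb U\ominus K_{\mathrm{inv}}\mathsf S$. $\mathtt{P}_{N_p}(x)$ is the tube-enhanced multi-stage MPC problem: a scenario tree with nodes $z_k^j$, inputs $v_k^j$, $n_d=n_pn_{\overline w}$ branches $z_{k+1}^c=A_iz_k^j+B_iv_k^j+w_l$ per node up to the robust horizon $N_r$, with $z_k^j\in\mathbb Z$, $v_k^j\in\mathbb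 V$; beyond $N_r$ one tube $\mathsf Z_k^j$ per scenario with policy $v_k^j+K_{\mathrm{pred}}z$, $(A_i+B_iK_{\mathrm{pred}})\mathsf Z_k^j\oplus\{B_iv_k^j\}\oplus\overline{\mathsf W}\subseteq\mathsf Z_{k+1}^j$, $z_{N_r}^j\in\mathsf Z_{N_r}^j\subseteq\mathbb Z$, $\mathsf Z_k^j\subseteq\mathbb Z$, $\{v_k^j\}\oplus K_{\mathrm{pred}}\mathsf Z_k^j\subseteq\mathbb V$, $\mathsf Z_{N_p}^j\subseteq\mathbb Z_f$, and $x\in\{z_0^1\}\oplus\mathsf S$. Cost: $\sum_{k=0}^{N_r-1}\sum_j\omega_k^j\ell(z_k^j,v_k^j)+\sum_{k=N_r}^{N_p-1}\max_{\tilde z_k^j\in\mathsf Z_k^j}\sum_j\omega_k^j\ell(\tilde z_k^j,v_k^j+K_{\mathrm{pred}}\tilde z_k^j)+\max\sum_jV_f(\tilde z_{N_p}^j)$. $\mathtt{X}_{N_p}$ is its feasible set. (A1) Weights: each realization $(A_i,B_i,w_l)$ has a positive weight; the root weight satisfies $0<\omega_0^1\le$ all realization weights; nodes at stages $1,\dots,N_r-1$ carry the weight of the realization producing them; tube weights are $\omega_k^j=n_d^{k-N_r}\omega_{\mathrm{tube}}$ for $k=N_r,\dots,N_p-1$ with bounded $\omega_{\mathrm{tube}}\ge$ all realization weights. (A2) $\mathsf S$ is a convex compact disturbance invariant polytope with $\mathsf S\subset\mathbb X$, $K_{\mathrm{inv}}\mathsf S\subset\mathbb U$ (and $\mathsf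 S=\{0\}$ if $\underline{\mathsf W}=\{0\}$). (A3) $\mathbb Z_f\subseteq\mathbb X\ominus\mathsf S$ is a robust positively invariant polytope containing the origin for $K_f=K_{\mathrm{pred}}$, $K_f\mathbb Z_f\subseteq\mathbb U\ominus K_{\mathrm{inv}}\mathsf S$, and for all tubes $\mathsf Z\subseteq\mathbb Z_f$, $(A_i+B_iK_f)\mathsf Z\oplus\overline{\mathsf W}\subseteq\mathsf Z^+\subseteq\mathbb Z_f$ for all $i$. (A4) $\ell$ and $V_f$ are convex, positive definite; $\ell(z,v)\ge c|z|_{\mathbb Z_f}$ for $z\in\mathbb Z\setminus\mathbb Z_f$ with $|z|_{\mathbb Z_f}=\min_{y\in\mathbb Z_f}\|z-y\|_p$, $c>0$; $\ell(z,K_fz)=0$ and $V_f(z)=0$ on $\mathbb Z_f$; $\max_{\tilde z\in\mathsf Z}\ell(\tilde z,v+K_{\mathrm{pred}}\tilde z)\ge c'|\tilde z|_{\mathbb Z_f}$ for $\mathsf Z\subseteq\mathbb Z\setminus\mathbb Z_f$ ($c'>0$), and $\max_{\tilde z\in\mathsf Z}\ell(\tilde z,K_f\tilde z)=0$, $\max_{\tilde z\in\mathsf Z}V_f(\tilde z)=0$ for $\mathsf Z\subseteq\mathbb Z_f$. *)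

theory Defs
  imports "HOL-Analysis.Analysis"
begin

definition msum :: "'a::plus set \<Rightarrow> 'a set \<Rightarrow> 'a set" where
  "msum P Q = {p + q | p q. p \<in> P \<and> q \<in> Q}"

definition pdiff :: "'a::ab_group_add set \<Rightarrow> 'a set \<Rightarrow> 'a set" where
  "pdiff P Q = {x. \<forall>q\<in>Q. x + q \<in> P}"

definition mimg :: "real^'n^'m \<Rightarrow> (real^'n) set \<Rightarrow> (real^'m) set" where
  "mimg M P = (\<lambda>y. M *v y) ` P"

text \<open>Realizations r < nd with nd = np * nw; realization r stands for the model index
  i = r div nw and the disturbance vertex index l = r mod nw.  Node j at stage k+1 of the
  tree (k+1 \<le> Nr) has parent node j div nd at stage k and is produced by realization
  j mod nd.  At stage k there are nd^k nodes; beyond Nr there are nd^Nr scenarios.\<close>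

definition Wbar :: "nat \<Rightarrow> (nat \<Rightarrow> real^'n) \<Rightarrow> (real^'n) set" where
  "Wbar nw w = convex hull (w ` {..<nw})"

text \<open>Feasibility of the decision variables (z, v, T) of the tube-enhanced multi-stage MPC
  problem P_Np(x).  Here Zt = X \<ominus> S and Vt = U \<ominus> K_inv S are the tightened sets.\<close>

definition mpc_feasible ::
  "nat \<Rightarrow> nat \<Rightarrow> (nat \<Rightarrow> real^'n^'n) \<Rightarrow> (nat \<Rightarrow> real^'m^'n) \<Rightarrow> (nat \<Rightarrow> real^'n)
   \<Rightarrow> (real^'n) set \<Rightarrow> (real^'m) set \<Rightarrow> (real^'n) set \<Rightarrow> real^'n^'m \<Rightarrow> (real^'n) set
   \<Rightarrow> nat \<Rightarrow> nat \<Rightarrow> real^'n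
   \<Rightarrow> (nat \<Rightarrow> nat \<Rightarrow> real^'n) \<Rightarrow> (nat \<Rightarrow> nat \<Rightarrow> real^'m) \<Rightarrow> (nat \<Rightarrow> nat \<Rightarrow> (real^'n) set)
   \<Rightarrow> bool" where
  "mpc_feasible np nw A B w Zt Vt S Kp Zf Nr Np x z v T \<longleftrightarrow>
     (let nd = np * nw in
      x \<in> msum {z 0 0} S \<and>
      (\<forall>k<Nr. \<forall>j<nd ^ k.
          z k j \<in> Zt \<and> v k j \<in> Vt \<and>
          (\<forall>r<nd. z (Suc k) (j * nd + r) =
               A (r div nw) *v z k j + B (r div nw) *v v k j + w (r mod nw))) \<and>
      (\<forall>j<nd ^ Nr.
          z Nr j \<in> T Nr j \<and>
          (\<forall>k\<in>{Nr..Np}. polytope (T k j) \<and> T k j \<subseteq> Zt) \<and>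
          (\<forall>k\<in>{Nr..<Np}.
              msum {v k j} (mimg Kp (T k j)) \<subseteq> Vt \<and>
              (\<forall>i<np. msum (msum (mimg (A i + B i ** Kp) (T k j)) {B i *v v k j}) (Wbar nw w)
                        \<subseteq> T (Suc k) j)) \<and>
          T Np j \<subseteq> Zf))"

definition node_weight :: "nat \<Rightarrow> (nat \<Rightarrow> real) \<Rightarrow> real \<Rightarrow> nat \<Rightarrow> nat \<Rightarrow> real" where
  "node_weight nd rho om0 k j = (if k = 0 then om0 else rho (j mod nd))"

definition mpc_cost ::
  "nat \<Rightarrow> nat \<Rightarrow> (real^'n \<Rightarrow> real^'m \<Rightarrow> real) \<Rightarrow> (real^'n \<Rightarrow> real)
   \<Rightarrow> (nat \<Rightarrow> real) \<Rightarrow> real \<Rightarrow> real \<Rightarrow> real^'n^'m \<Rightarrow> nat \<Rightarrow> nat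
   \<Rightarrow> (nat \<Rightarrow> nat \<Rightarrow> real^'n) \<Rightarrow> (nat \<Rightarrow> nat \<Rightarrow> real^'m) \<Rightarrow> (nat \<Rightarrow> nat \<Rightarrow> (real^'n) set)
   \<Rightarrow> real" where
  "mpc_cost np nw l Vf rho om0 omt Kp Nr Np z v T =
     (let nd = np * nw; M = nd ^ Nr in
       (\<Sum>k<Nr. \<Sum>j<nd ^ k. node_weight nd rho om0 k j * l (z k j) (v k j))
     + (\<Sum>k\<in>{Nr..<Np}.
          Sup {(\<Sum>j<M. (real nd ^ (k - Nr) * omt) * l (y j) (v k j + Kp *v y j)) | y.
                 \<forall>j<M. y j \<in> T k j})
     + Sup {(\<Sum>j<M. Vf (y j)) | y. \<forall>j<M. y j \<in> T Np j})"

definition mpc_value ::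
  "nat \<Rightarrow> nat \<Rightarrow> (nat \<Rightarrow> real^'n^'n) \<Rightarrow> (nat \<Rightarrow> real^'m^'n) \<Rightarrow> (nat \<Rightarrow> real^'n)
   \<Rightarrow> (real^'n) set \<Rightarrow> (real^'m) set \<Rightarrow> (real^'n) set \<Rightarrow> real^'n^'m \<Rightarrow> (real^'n) set
   \<Rightarrow> (real^'n \<Rightarrow> real^'m \<Rightarrow> real) \<Rightarrow> (real^'n \<Rightarrow> real) \<Rightarrow> (nat \<Rightarrow> real) \<Rightarrow> real \<Rightarrow> real
   \<Rightarrow> nat \<Rightarrow> nat \<Rightarrow> real^'n \<Rightarrow> real" where
  "mpc_value np nw A B w Zt Vt S Kp Zf l Vf rho om0 omt Nr Np x =
     Inf {mpc_cost np nw l Vf rho om0 omt Kp Nr Np z v T | z v T.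
            mpc_feasible np nw A B w Zt Vt S Kp Zf Nr Np x z v T}"

definition mpc_feasible_set ::
  "nat \<Rightarrow> nat \<Rightarrow> (nat \<Rightarrow> real^'n^'n) \<Rightarrow> (nat \<Rightarrow> real^'m^'n) \<Rightarrow> (nat \<Rightarrow> real^'n)
   \<Rightarrow> (real^'n) set \<Rightarrow> (real^'m) set \<Rightarrow> (real^'n) set \<Rightarrow> real^'n^'m \<Rightarrow> (real^'n) set
   \<Rightarrow> nat \<Rightarrow> nat \<Rightarrow> (real^'n) set" where
  "mpc_feasible_set np nw A B w Zt Vt S Kp Zf Nr Np =
     {x. \<exists>z v T. mpc_feasible np nw A B w Zt Vt S Kp Zf Nr Np x z v T}"

end

theory Submission
  imports Defs
begin

lemma msum_ne: "P \<noteq> {} \<Longrightarrow> Q \<noteq> {} \<Longrightarrow> msum P Q \<noteq> {}"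
  unfolding msum_def by blast

lemma mimg_ne: "P \<noteq> {} \<Longrightarrow> mimg M P \<noteq> {}"
  unfolding mimg_def by blast

lemma msum_zero_right: "msum P {0} = (P::'a::monoid_add set)"
  unfolding msum_def by auto

lemma msum_zero_left: "msum {0} P = (P::'a::monoid_add set)"
  unfolding msum_def by auto

lemma mimg_mono: "P \<subseteq> Q \<Longrightarrow> mimg M P \<subseteq> mimg M Q"
  unfolding mimg_def by blast

lemma Wbar_ne: "nw \<ge> 1 \<Longrightarrow> Wbar nw w \<noteq> {}"
  unfolding Wbar_def
  by (metis hull_subset image_eqI lessThan_iff less_le_trans zero_less_one empty_iff subsetD)

lemma sum_set_bdd:
  fixes f :: "nat \<Rightarrow> 'a::metric_space \<Rightarrow> real"
  assumes "\<forall>j<M. compact (K j)" "\<forall>j<M. continuous_on (K j) (f j)"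
  shows "bdd_above {(\<Sum>j<M. f j (y j)) | y. \<forall>j<M. y j \<in> K j}"
proof -
  have b: "f j x \<le> Sup (f j ` K j)" if "j < M" "x \<in> K j" for j x
  proof -
    have "compact (f j ` K j)" using assms that compact_continuous_image by blast
    then have "bdd_above (f j ` K j)" by (intro bounded_imp_bdd_above compact_imp_bounded)
    then show ?thesis using that by (intro cSup_upper) auto
  qed
  show ?thesis
    unfolding bdd_above_def
    by (rule exI[of _ "\<Sum>j<M. Sup (f j ` K j)"]) (auto intro!: sum_mono b)
qed

lemma sum_set_nonneg:
  fixes f :: "nat \<Rightarrow> 'a::metric_space \<Rightarrow> real"
  assumes "\<forall>j<M. compact (K j)" "\<forall>j<M. continuous_on (K j) (f j)"
    and "\<forall>j<M. K j \<noteq> {}" and "\<forall>j<M. \<forall>x\<in>K j. 0 \<le> f j x"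
  shows "0 \<le> Sup {(\<Sum>j<M. f j (y j)) | y. \<forall>j<M. y j \<in> K j}"
proof -
  define y0 where "y0 = (\<lambda>j. SOME x. x \<in> K j)"
  have y0: "\<forall>j<M. y0 j \<in> K j" using assms(3) unfolding y0_def by (auto simp: some_in_eq)
  have "0 \<le> (\<Sum>j<M. f j (y0 j))" using y0 assms(4) by (auto intro!: sum_nonneg)
  also have "\<dots> \<le> Sup {(\<Sum>j<M. f j (y j)) | y. \<forall>j<M. y j \<in> K j}"
    using y0 by (intro cSup_upper sum_set_bdd[OF assms(1,2)]) auto
  finally show ?thesis .
qed

lemma sum_set_zero:
  fixes f :: "nat \<Rightarrow> 'a \<Rightarrow> real"
  assumes "\<forall>j<M. K j \<noteq> {}" and "\<forall>j<M. \<forall>x\<in>K j. f j x = 0"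
  shows "Sup {(\<Sum>j<M. f j (y j)) | y. \<forall>j<M. y j \<in> K j} = 0"
proof -
  define y0 where "y0 = (\<lambda>j. SOME x. x \<in> K j)"
  have y0: "\<forall>j<M. y0 j \<in> K j" using assms(1) unfolding y0_def by (auto simp: some_in_eq)
  have "{(\<Sum>j<M. f j (y j)) | y. \<forall>j<M. y j \<in> K j} = {0}"
  proof
    show "{(\<Sum>j<M. f j (y j)) | y. \<forall>j<M. y j \<in> K j} \<subseteq> {0}"
      using assms(2) by auto
    have "(\<Sum>j<M. f j (y0 j)) = 0" using y0 assms(2) by auto
    then show "{0} \<subseteq> {(\<Sum>j<M. f j (y j)) | y. \<forall>j<M. y j \<in> K j}" using y0 by force
  qed
  then show ?thesis by simp
qed

lemma T_nonempty:
  assumes feas: "mpc_feasible np nw A B w Zt Vt S Kp Zf Nr Np x z v T"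
    and np: "np \<ge> 1" and nw: "nw \<ge> 1" and j: "j < (np*nw) ^ Nr"
  shows "Nr \<le> k \<Longrightarrow> k \<le> Np \<Longrightarrow> T k j \<noteq> {}"
proof (induction k rule: dec_induct)
  case base
  then show ?case using feas j unfolding mpc_feasible_def Let_def by auto
next
  case (step k)
  have "msum (msum (mimg (A 0 + B 0 ** Kp) (T k j)) {B 0 *v v k j}) (Wbar nw w) \<subseteq> T (Suc k) j"
    using feas j step np unfolding mpc_feasible_def Let_def by auto
  moreover have "msum (msum (mimg (A 0 + B 0 ** Kp) (T k j)) {B 0 *v v k j}) (Wbar nw w) \<noteq> {}"
    using step by (intro msum_ne mimg_ne Wbar_ne nw) auto
  ultimately show ?case by blast
qed


lemma l_cont:
  fixes l :: "real^'n \<Rightarrow> real^'m \<Rightarrow> real" and Kp :: "real^'n^'m"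
  assumes "convex_on UNIV (\<lambda>p. l (fst p) (snd p))"
  shows "continuous_on UNIV (\<lambda>y. l y (a + Kp *v y))"
proof -
  have c: "continuous_on UNIV (\<lambda>p. l (fst p) (snd p))"
    using assms by (intro convex_on_continuous) auto
  have c2: "continuous_on UNIV (\<lambda>y::real^'n. (y, a + Kp *v y))"
    by (intro continuous_intros)
  have "continuous_on UNIV ((\<lambda>p. l (fst p) (snd p)) \<circ> (\<lambda>y. (y, a + Kp *v y)))"
    by (rule continuous_on_compose[OF c2]) (rule continuous_on_subset[OF c], auto)
  then show ?thesis by (simp add: o_def)
qed

lemma cost_nonneg:
  assumes feas: "mpc_feasible np nw A B w Zt Vt S Kp Zf Nr N x z v T"
    and np: "np \<ge> 1" and nw: "nw \<ge> 1" and om0: "0 < om0"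
    and rho: "\<forall>r<np * nw. 0 < rho r" and omt: "0 \<le> omt"
    and l0: "\<forall>z u. 0 \<le> l z u" and V0: "\<forall>z. 0 \<le> Vf z"
    and hl: "\<And>a. continuous_on UNIV (\<lambda>y. l y (a + Kp *v y))"
    and hV: "continuous_on UNIV Vf" and NrN: "Nr \<le> N"
  shows "0 \<le> mpc_cost np nw l Vf rho om0 omt Kp Nr N z v T"
proof -
  define nd where "nd = np * nw"
  define M where "M = nd ^ Nr"
  have nd0: "0 < nd" using np nw unfolding nd_def by simp
  have poly: "\<forall>j<M. \<forall>k\<in>{Nr..N}. polytope (T k j)"
    using feas unfolding mpc_feasible_def Let_def M_def nd_def by auto
  have ne: "\<forall>j<M. \<forall>k\<in>{Nr..N}. T k j \<noteq> {}"
    using T_nonempty[OF feas np nw] unfolding M_def nd_def by auto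
  have s1: "0 \<le> (\<Sum>k<Nr. \<Sum>j<nd ^ k. node_weight nd rho om0 k j * l (z k j) (v k j))"
  proof (intro sum_nonneg mult_nonneg_nonneg)
    fix k j
    have "j mod nd < nd" using nd0 by simp
    then show "0 \<le> node_weight nd rho om0 k j"
      using om0 rho unfolding node_weight_def nd_def by (auto intro: less_imp_le)
    show "0 \<le> l (z k j) (v k j)" using l0 by auto
  qed
  have s2: "0 \<le> (\<Sum>k\<in>{Nr..<N}.
          Sup {(\<Sum>j<M. (real nd ^ (k - Nr) * omt) * l (y j) (v k j + Kp *v y j)) | y.
                 \<forall>j<M. y j \<in> T k j})"
  proof (intro sum_nonneg)
    fix k assume k: "k \<in> {Nr..<N}"
    show "0 \<le> Sup {(\<Sum>j<M. (real nd ^ (k - Nr) * omt) * l (y j) (v k j + Kp *v y j)) | y.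
                 \<forall>j<M. y j \<in> T k j}"
    proof (rule sum_set_nonneg)
      show "\<forall>j<M. compact (T k j)" using poly k by (auto intro!: polytope_imp_compact)
      show "\<forall>j<M. continuous_on (T k j) (\<lambda>y. (real nd ^ (k - Nr) * omt) * l y (v k j + Kp *v y))"
        by (auto intro!: continuous_intros continuous_on_subset[OF hl])
      show "\<forall>j<M. T k j \<noteq> {}" using ne k by auto
      show "\<forall>j<M. \<forall>y\<in>T k j. 0 \<le> (real nd ^ (k - Nr) * omt) * l y (v k j + Kp *v y)"
        using omt l0 by (auto intro!: mult_nonneg_nonneg)
    qed
  qed
  have s3: "0 \<le> Sup {(\<Sum>j<M. Vf (y j)) | y. \<forall>j<M. y j \<in> T N j}"
  proof (rule sum_set_nonneg)
    show "\<forall>j<M. compact (T N j)" using poly NrN by (auto intro!: polytope_imp_compact)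
    show "\<forall>j<M. continuous_on (T N j) Vf"
      by (auto intro!: continuous_on_subset[OF hV])
    show "\<forall>j<M. T N j \<noteq> {}" using ne NrN by auto
    show "\<forall>j<M. \<forall>y\<in>T N j. 0 \<le> Vf y" using V0 by auto
  qed
  show ?thesis unfolding mpc_cost_def Let_def nd_def[symmetric] M_def[symmetric]
    using s1 s2 s3 by linarith
qed


lemma extension:
  assumes feas: "mpc_feasible np nw A B w Zt Vt S Kp Zf Nr Np x z v T"
    and np: "np \<ge> 1" and nw: "nw \<ge> 1" and hor: "Nr \<le> Np"
    and ZfZt: "Zf \<subseteq> Zt" and inp: "mimg Kp Zf \<subseteq> Vt"
    and tube: "\<forall>Z. polytope Z \<and> Z \<subseteq> Zf \<longrightarrow>
                    (\<exists>Z'. polytope Z' \<and> Z' \<subseteq> Zf \<and>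
                       (\<forall>i<np. msum (mimg (A i + B i ** Kp) Z) (Wbar nw w) \<subseteq> Z'))"
    and zero: "\<forall>z\<in>Zf. l z (Kp *v z) = 0 \<and> Vf z = 0"
  shows "\<exists>v' T'. mpc_feasible np nw A B w Zt Vt S Kp Zf Nr (Suc Np) x z v' T' \<and>
           mpc_cost np nw l Vf rho om0 omt Kp Nr (Suc Np) z v' T' =
           mpc_cost np nw l Vf rho om0 omt Kp Nr Np z v T"
proof -
  define nd where "nd = np * nw"
  define M where "M = nd ^ Nr"
  have F: "x \<in> msum {z 0 0} S"
     "\<forall>k<Nr. \<forall>j<nd ^ k.
          z k j \<in> Zt \<and> v k j \<in> Vt \<and>
          (\<forall>r<nd. z (Suc k) (j * nd + r) =
               A (r div nw) *v z k j + B (r div nw) *v v k j + w (r mod nw))"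
     "\<forall>j<M.
          z Nr j \<in> T Nr j \<and>
          (\<forall>k\<in>{Nr..Np}. polytope (T k j) \<and> T k j \<subseteq> Zt) \<and>
          (\<forall>k\<in>{Nr..<Np}.
              msum {v k j} (mimg Kp (T k j)) \<subseteq> Vt \<and>
              (\<forall>i<np. msum (msum (mimg (A i + B i ** Kp) (T k j)) {B i *v v k j}) (Wbar nw w)
                        \<subseteq> T (Suc k) j)) \<and>
          T Np j \<subseteq> Zf"
    using feas unfolding mpc_feasible_def Let_def nd_def M_def by auto
  have ne: "\<forall>j<M. T Np j \<noteq> {}"
    using T_nonempty[OF feas np nw] hor unfolding M_def nd_def by auto
  define Z' where "Z' = (\<lambda>j. SOME Z'. polytope Z' \<and> Z' \<subseteq> Zf \<and>
                       (\<forall>i<np. msum (mimg (A i + B i ** Kp) (T Np j)) (Wbar nw w) \<subseteq> Z'))"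
  have Z': "polytope (Z' j) \<and> Z' j \<subseteq> Zf \<and>
             (\<forall>i<np. msum (mimg (A i + B i ** Kp) (T Np j)) (Wbar nw w) \<subseteq> Z' j)" if "j < M" for j
  proof -
    have "polytope (T Np j) \<and> T Np j \<subseteq> Zf" using F(3) that hor by auto
    then have "\<exists>Z'. polytope Z' \<and> Z' \<subseteq> Zf \<and>
                       (\<forall>i<np. msum (mimg (A i + B i ** Kp) (T Np j)) (Wbar nw w) \<subseteq> Z')"
      using tube by blast
    then show ?thesis unfolding Z'_def by (rule someI_ex)
  qed
  have Z'ne: "Z' j \<noteq> {}" if "j < M" for j
  proof -
    have "msum (mimg (A 0 + B 0 ** Kp) (T Np j)) (Wbar nw w) \<subseteq> Z' j" using Z'[OF that] np by auto
    moreover have "msum (mimg (A 0 + B 0 ** Kp) (T Np j)) (Wbar nw w) \<noteq> {}"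
      using ne that by (intro msum_ne mimg_ne Wbar_ne nw) auto
    ultimately show ?thesis by blast
  qed
  define T' where "T' = (\<lambda>k j. if k = Suc Np then Z' j else T k j)"
  define v' where "v' = (\<lambda>k j. if k = Np then 0 else v k j)"
  have G2: "\<forall>k<Nr. \<forall>j<nd ^ k.
          z k j \<in> Zt \<and> v' k j \<in> Vt \<and>
          (\<forall>r<nd. z (Suc k) (j * nd + r) =
               A (r div nw) *v z k j + B (r div nw) *v v' k j + w (r mod nw))"
    using F(2) hor unfolding v'_def by auto
  have G3: "z Nr j \<in> T' Nr j \<and>
          (\<forall>k\<in>{Nr..Suc Np}. polytope (T' k j) \<and> T' k j \<subseteq> Zt) \<and>
          (\<forall>k\<in>{Nr..<Suc Np}.
              msum {v' k j} (mimg Kp (T' k j)) \<subseteq> Vt \<and>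
              (\<forall>i<np. msum (msum (mimg (A i + B i ** Kp) (T' k j)) {B i *v v' k j}) (Wbar nw w)
                        \<subseteq> T' (Suc k) j)) \<and>
          T' (Suc Np) j \<subseteq> Zf" if j: "j < M" for j
  proof -
    have F3: "z Nr j \<in> T Nr j" "\<forall>k\<in>{Nr..Np}. polytope (T k j) \<and> T k j \<subseteq> Zt"
      "\<forall>k\<in>{Nr..<Np}.
              msum {v k j} (mimg Kp (T k j)) \<subseteq> Vt \<and>
              (\<forall>i<np. msum (msum (mimg (A i + B i ** Kp) (T k j)) {B i *v v k j}) (Wbar nw w)
                        \<subseteq> T (Suc k) j)" "T Np j \<subseteq> Zf"
      using F(3) j by blast+
    have Z'j: "polytope (Z' j)" "Z' j \<subseteq> Zf"
       "\<forall>i<np. msum (mimg (A i + B i ** Kp) (T Np j)) (Wbar nw w) \<subseteq> Z' j"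
      using Z'[OF j] by blast+
    have P1: "z Nr j \<in> T' Nr j" using F3(1) hor unfolding T'_def by simp
    have P2: "polytope (T' k j) \<and> T' k j \<subseteq> Zt" if k: "k \<in> {Nr..Suc Np}" for k
    proof (cases "k = Suc Np")
      case True
      then show ?thesis using Z'j ZfZt unfolding T'_def by simp
    next
      case False
      then have "k \<in> {Nr..Np}" using k by auto
      then show ?thesis using F3(2) False unfolding T'_def by simp
    qed
    have P3: "msum {v' k j} (mimg Kp (T' k j)) \<subseteq> Vt \<and>
              (\<forall>i<np. msum (msum (mimg (A i + B i ** Kp) (T' k j)) {B i *v v' k j}) (Wbar nw w)
                        \<subseteq> T' (Suc k) j)" if k: "k \<in> {Nr..<Suc Np}" for k
    proof (cases "k = Np")
      case True
      have "msum {v' k j} (mimg Kp (T' k j)) = mimg Kp (T Np j)"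
        using True unfolding T'_def v'_def by (simp add: msum_zero_left)
      also have "\<dots> \<subseteq> Vt" using F3(4) inp mimg_mono by blast
      finally have c1: "msum {v' k j} (mimg Kp (T' k j)) \<subseteq> Vt" .
      have "msum (msum (mimg (A i + B i ** Kp) (T' k j)) {B i *v v' k j}) (Wbar nw w)
                        = msum (mimg (A i + B i ** Kp) (T Np j)) (Wbar nw w)" for i
        using True unfolding T'_def v'_def by (simp add: msum_zero_right)
      moreover have "T' (Suc k) j = Z' j" using True unfolding T'_def by simp
      ultimately show ?thesis using c1 Z'j(3) by simp
    next
      case False
      then have k': "k \<in> {Nr..<Np}" "Suc k \<noteq> Suc Np" using k by auto
      then have "T' k j = T k j" "T' (Suc k) j = T (Suc k) j" "v' k j = v k j"
        unfolding T'_def v'_def by auto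
      then show ?thesis using F3(3) k' by simp
    qed
    have P4: "T' (Suc Np) j \<subseteq> Zf" using Z'j unfolding T'_def by simp
    show ?thesis using P1 P2 P3 P4 by blast
  qed
  have feas': "mpc_feasible np nw A B w Zt Vt S Kp Zf Nr (Suc Np) x z v' T'"
    unfolding mpc_feasible_def Let_def nd_def[symmetric] M_def[symmetric]
    using F(1) G2 G3 by blast
  have e1: "(\<Sum>k<Nr. \<Sum>j<nd ^ k. node_weight nd rho om0 k j * l (z k j) (v' k j)) =
            (\<Sum>k<Nr. \<Sum>j<nd ^ k. node_weight nd rho om0 k j * l (z k j) (v k j))"
    using hor unfolding v'_def by (intro sum.cong) auto
  have e2: "(\<Sum>k\<in>{Nr..<Suc Np}.
          Sup {(\<Sum>j<M. (real nd ^ (k - Nr) * omt) * l (y j) (v' k j + Kp *v y j)) | y.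
                 \<forall>j<M. y j \<in> T' k j}) =
          (\<Sum>k\<in>{Nr..<Np}.
          Sup {(\<Sum>j<M. (real nd ^ (k - Nr) * omt) * l (y j) (v k j + Kp *v y j)) | y.
                 \<forall>j<M. y j \<in> T k j})"
  proof -
    have a: "Sup {(\<Sum>j<M. (real nd ^ (Np - Nr) * omt) * l (y j) (v' Np j + Kp *v y j)) | y.
                 \<forall>j<M. y j \<in> T' Np j} = 0"
    proof (rule sum_set_zero)
      show "\<forall>j<M. T' Np j \<noteq> {}" using ne unfolding T'_def by auto
      show "\<forall>j<M. \<forall>y\<in>T' Np j. real nd ^ (Np - Nr) * omt * l y (v' Np j + Kp *v y) = 0"
      proof (intro allI impI ballI)
        fix j y assume j: "j < M" and y: "y \<in> T' Np j"
        have "T Np j \<subseteq> Zf" using F(3) j by blast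
        then have "y \<in> Zf" using y unfolding T'_def by auto
        then show "real nd ^ (Np - Nr) * omt * l y (v' Np j + Kp *v y) = 0"
          using zero unfolding v'_def by simp
      qed
    qed
    have b: "(\<Sum>k\<in>{Nr..<Np}.
          Sup {(\<Sum>j<M. (real nd ^ (k - Nr) * omt) * l (y j) (v' k j + Kp *v y j)) | y.
                 \<forall>j<M. y j \<in> T' k j}) =
          (\<Sum>k\<in>{Nr..<Np}.
          Sup {(\<Sum>j<M. (real nd ^ (k - Nr) * omt) * l (y j) (v k j + Kp *v y j)) | y.
                 \<forall>j<M. y j \<in> T k j})"
      unfolding T'_def v'_def by (intro sum.cong) auto
    show ?thesis using a b hor by (simp add: sum.atLeastLessThan_Suc)
  qed
  have e3: "Sup {(\<Sum>j<M. Vf (y j)) | y. \<forall>j<M. y j \<in> T' (Suc Np) j} = 0"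
    by (rule sum_set_zero) (use Z'ne Z' zero in \<open>fastforce simp: T'_def\<close>)+
  have e4: "Sup {(\<Sum>j<M. Vf (y j)) | y. \<forall>j<M. y j \<in> T Np j} = 0"
  proof (rule sum_set_zero)
    show "\<forall>j<M. T Np j \<noteq> {}" using ne by blast
    show "\<forall>j<M. \<forall>x\<in>T Np j. Vf x = 0"
    proof (intro allI impI ballI)
      fix j y assume j: "j < M" and y: "y \<in> T Np j"
      have "T Np j \<subseteq> Zf" using F(3) j by blast
      then show "Vf y = 0" using y zero by auto
    qed
  qed
  have "mpc_cost np nw l Vf rho om0 omt Kp Nr (Suc Np) z v' T' =
           mpc_cost np nw l Vf rho om0 omt Kp Nr Np z v T"
    unfolding mpc_cost_def Let_def nd_def[symmetric] M_def[symmetric]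
    using e1 e2 e3 e4 by simp
  then show ?thesis using feas' by blast
qed

theorem lemma3:
  fixes A :: "nat \<Rightarrow> real^'n^'n" and B :: "nat \<Rightarrow> real^'m^'n"
    and w :: "nat \<Rightarrow> real^'n"
    and W Wsmall X S Zf :: "(real^'n) set" and U :: "(real^'m) set"
    and Kinv Kp :: "real^'n^'m"
    and l :: "real^'n \<Rightarrow> real^'m \<Rightarrow> real" and Vf :: "real^'n \<Rightarrow> real"
    and rho :: "nat \<Rightarrow> real" and om0 omt :: real
    and np nw Nr Np :: nat and x :: "real^'n"
  assumes np: "np \<ge> 1" and nw: "nw \<ge> 1"
    and W: "polytope W" "0 \<in> interior W"
    and Wsplit: "W \<subseteq> msum (Wbar nw w) Wsmall"
    and XU: "polytope X" "polytope U"
    and S_inv: "\<forall>i<np. msum (mimg (A i + B i ** Kinv) S) Wsmall \<subseteq> S"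
    and horizon: "Nr \<le> Np"
    \<comment> \<open>(A1) weights\<close>
    and A1_rho: "\<forall>r<np * nw. rho r > 0"
    and A1_root: "0 < om0" "\<forall>r<np * nw. om0 \<le> rho r"
    and A1_tube: "\<forall>r<np * nw. rho r \<le> omt"
    \<comment> \<open>(A2)\<close>
    and A2: "polytope S" "S \<subseteq> X" "mimg Kinv S \<subseteq> U"
            "Wsmall = {0} \<Longrightarrow> S = {0}"
    \<comment> \<open>(A3)\<close>
    and A3_Zf: "polytope Zf" "0 \<in> Zf" "Zf \<subseteq> pdiff X S"
    and A3_rpi: "\<forall>i<np. msum (mimg (A i + B i ** Kp) Zf) (Wbar nw w) \<subseteq> Zf"
    and A3_input: "mimg Kp Zf \<subseteq> pdiff U (mimg Kinv S)"
    and A3_tube: "\<forall>Z. polytope Z \<and> Z \<subseteq> Zf \<longrightarrow>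
                    (\<exists>Z'. polytope Z' \<and> Z' \<subseteq> Zf \<and>
                       (\<forall>i<np. msum (mimg (A i + B i ** Kp) Z) (Wbar nw w) \<subseteq> Z'))"
    \<comment> \<open>(A4)\<close>
    and A4_convex: "convex_on UNIV (\<lambda>p. l (fst p) (snd p))" "convex_on UNIV Vf"
    and A4_nonneg: "\<forall>z u. 0 \<le> l z u" "\<forall>z. 0 \<le> Vf z"
    and A4_lower: "\<exists>c>0. \<forall>z\<in>pdiff X S - Zf. \<forall>u. l z u \<ge> c * infdist z Zf"
    and A4_zero: "\<forall>z\<in>Zf. l z (Kp *v z) = 0 \<and> Vf z = 0"
    and A4_tube_lower: "\<exists>c'>0. \<forall>Z u. polytope Z \<and> Z \<noteq> {} \<and> Z \<subseteq> pdiff X S - Zf \<longrightarrow>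
                          (\<forall>zt\<in>Z. Sup ((\<lambda>y. l y (u + Kp *v y)) ` Z) \<ge> c' * infdist zt Zf)"
    and A4_tube_zero: "\<forall>Z. polytope Z \<and> Z \<noteq> {} \<and> Z \<subseteq> Zf \<longrightarrow>
                          Sup ((\<lambda>y. l y (Kp *v y)) ` Z) = 0 \<and> Sup (Vf ` Z) = 0"
    and x: "x \<in> mpc_feasible_set np nw A B w (pdiff X S) (pdiff U (mimg Kinv S)) S Kp Zf Nr Np"
  shows "mpc_value np nw A B w (pdiff X S) (pdiff U (mimg Kinv S)) S Kp Zf l Vf rho om0 omt Nr (Suc Np) x
         \<le> mpc_value np nw A B w (pdiff X S) (pdiff U (mimg Kinv S)) S Kp Zf l Vf rho om0 omt Nr Np x"
proof -
  let ?Zt = "pdiff X S" and ?Vt = "pdiff U (mimg Kinv S)"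
  define C where "C = (\<lambda>N. {mpc_cost np nw l Vf rho om0 omt Kp Nr N z v T | z v T.
            mpc_feasible np nw A B w ?Zt ?Vt S Kp Zf Nr N x z v T})"
  have ne: "C Np \<noteq> {}" using x unfolding C_def mpc_feasible_set_def by blast
  have omt: "0 \<le> omt" using A1_rho A1_tube np nw
    by (metis less_le_trans less_imp_le mult_pos_pos nat_less_le not_one_le_zero zero_less_iff_neq_zero)
  have hl: "\<And>a. continuous_on UNIV (\<lambda>y. l y (a + Kp *v y))" by (rule l_cont[OF A4_convex(1)])
  have hV: "continuous_on UNIV Vf" using A4_convex(2) by (intro convex_on_continuous) auto
  have bdd: "bdd_below (C (Suc Np))"
    unfolding bdd_below_def C_def
  proof (intro exI ballI)
    fix c assume "c \<in> {mpc_cost np nw l Vf rho om0 omt Kp Nr (Suc Np) z v T | z v T.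
            mpc_feasible np nw A B w ?Zt ?Vt S Kp Zf Nr (Suc Np) x z v T}"
    then obtain z v T where c: "c = mpc_cost np nw l Vf rho om0 omt Kp Nr (Suc Np) z v T"
      and f: "mpc_feasible np nw A B w ?Zt ?Vt S Kp Zf Nr (Suc Np) x z v T" by blast
    show "0 \<le> c" unfolding c
      by (rule cost_nonneg[OF f np nw A1_root(1) A1_rho omt A4_nonneg hl hV]) (use horizon in simp)
  qed
  have low: "Inf (C (Suc Np)) \<le> c" if cC: "c \<in> C Np" for c
  proof -
    obtain z v T where c: "c = mpc_cost np nw l Vf rho om0 omt Kp Nr Np z v T"
      and f: "mpc_feasible np nw A B w ?Zt ?Vt S Kp Zf Nr Np x z v T"
      using cC unfolding C_def by blast
    have "Zf \<subseteq> ?Zt" by (rule A3_Zf(3))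
    obtain v' T' where f': "mpc_feasible np nw A B w ?Zt ?Vt S Kp Zf Nr (Suc Np) x z v' T'"
      and e: "mpc_cost np nw l Vf rho om0 omt Kp Nr (Suc Np) z v' T' =
           mpc_cost np nw l Vf rho om0 omt Kp Nr Np z v T"
      using extension[where l=l and Vf=Vf and rho=rho and ?om0.0=om0 and omt=omt, OF f np nw horizon A3_Zf(3) A3_input A3_tube A4_zero]
      by blast
    have "c \<in> C (Suc Np)" using f' e unfolding C_def c by force
    then show ?thesis using bdd by (rule cInf_lower)
  qed
  have "Inf (C (Suc Np)) \<le> Inf (C Np)" using ne low by (rule cInf_greatest)
  then show ?thesis unfolding mpc_value_def C_def .
qed

end
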